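(* Let $\mathcal{F}=\{f_i\}_{i=1}^N$ be a frame for $\mathbb{R}^n$ and $\Lambda\subseteq\{1,\dots,N\}$. If $\ker(\Theta_{L(\mathcal{F}_\Lambda)})\cap\mathcal{S}_2=\ker(\Theta_{L(\mathcal{F})})\cap\mathcal{S}_2$, then a subspace $M$ of $\mathbb{R}^n$ is an $\mathcal{F}$-PR subspace if and only if it is an $\mathcal{F}_\Lambda$-PR subspace. Consequently, $M$ is a maximal $\mathcal{F}$-PR subspace if and only if it is a maximal $\mathcal{F}_\Lambda$-PR subspace.
   Context: A frame for $\mathbb{R}^n$ is a finite spanning sequence; $\mathcal{F}_\Lambda=\{f_i\}_{i\in\Lambda}$. $\mathcal{S}_2$ is the set of real symmetric $n\times n$ matrices of rank at most $2$, and $\Theta_{L(\mathcal{F}_\Lambda)}(A)=(f_i^TAf_i)_{i\in\Lambda}$ for symmetric $A$. For a finite sequence $\mathcal{G}=\{g_i\}$ in $\mathbb{R}^n$, a subspace $M$ is a $\mathcal{G}$-PR subspace if $\{P_Mg_i\}$ (with $P_M$ the orthogonal projection onto $M$) spans $M$ and whenever $x,y\in M$ satisfy $|\langle x,P_Mg_i\rangle|=|\langle y,P_Mg_i\rangle|$ for all $i$, then $x=\pm y$. It is maximal if it is not a proper subspace of another $\mathcal{G}$-PR subspace. *)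

theory Defs
  imports "HOL-Analysis.Analysis"
begin

definition proj_onto :: "(real^'n) set \<Rightarrow> real^'n \<Rightarrow> real^'n" where
  "proj_onto M x = (THE p. p \<in> M \<and> (\<forall>y\<in>M. (x - p) \<bullet> y = 0))"

definition S2 :: "(real^'n^'n) set" where
  "S2 = {A. transpose A = A \<and> rank A \<le> 2}"

definition Theta :: "(nat \<Rightarrow> real^'n) \<Rightarrow> nat set \<Rightarrow> real^'n^'n \<Rightarrow> nat \<Rightarrow> real" where
  "Theta g I A = (\<lambda>i. if i \<in> I then g i \<bullet> (A *v g i) else 0)"

definition ker_Theta :: "(nat \<Rightarrow> real^'n) \<Rightarrow> nat set \<Rightarrow> (real^'n^'n) set" where
  "ker_Theta g I = {A. transpose A = A \<and> Theta g I A = (\<lambda>_. 0)}"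

definition is_frame :: "(nat \<Rightarrow> real^'n) \<Rightarrow> nat set \<Rightarrow> bool" where
  "is_frame g I \<longleftrightarrow> finite I \<and> span (g ` I) = UNIV"

definition PR_subspace :: "(nat \<Rightarrow> real^'n) \<Rightarrow> nat set \<Rightarrow> (real^'n) set \<Rightarrow> bool" where
  "PR_subspace g I M \<longleftrightarrow> subspace M \<and>
     span ((\<lambda>i. proj_onto M (g i)) ` I) = M \<and>
     (\<forall>x\<in>M. \<forall>y\<in>M. (\<forall>i\<in>I. \<bar>x \<bullet> proj_onto M (g i)\<bar> = \<bar>y \<bullet> proj_onto M (g i)\<bar>)
        \<longrightarrow> x = y \<or> x = - y)"

definition max_PR_subspace :: "(nat \<Rightarrow> real^'n) \<Rightarrow> nat set \<Rightarrow> (real^'n) set \<Rightarrow> bool" where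
  "max_PR_subspace g I M \<longleftrightarrow> PR_subspace g I M \<and>
     \<not> (\<exists>M'. PR_subspace g I M' \<and> M \<subset> M')"

end

theory Submission
  imports Defs
begin

lemma proj_prop:
  fixes M :: "(real^'n) set"
  assumes "subspace M"
  shows "proj_onto M g \<in> M \<and> (\<forall>y\<in>M. (g - proj_onto M g) \<bullet> y = 0)"
proof -
  obtain p z where p: "p \<in> span M" "\<And>w. w \<in> span M \<Longrightarrow> orthogonal z w" "g = p + z"
    using orthogonal_subspace_decomp_exists by blast
  have pM: "p \<in> M" using p(1) assms by (metis span_eq_iff)
  have ex: "p \<in> M \<and> (\<forall>y\<in>M. (g - p) \<bullet> y = 0)"
    using pM p(2,3) assms by (auto simp: orthogonal_def span_base)
  have un: "q = p" if "q \<in> M \<and> (\<forall>y\<in>M. (g - q) \<bullet> y = 0)" for q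
  proof -
    have d: "p - q \<in> M" using that pM assms by (simp add: subspace_diff)
    have "(g - q) \<bullet> (p - q) = 0" "(g - p) \<bullet> (p - q) = 0" using that ex d by auto
    then have "(p - q) \<bullet> (p - q) = 0" by (simp add: algebra_simps inner_diff_left inner_diff_right)
    then show ?thesis by simp
  qed
  have "proj_onto M g = p" unfolding proj_onto_def
    using ex un by (rule the_equality)
  then show ?thesis using ex by simp
qed

lemma proj_inner:
  fixes M :: "(real^'n) set"
  assumes "subspace M" "x \<in> M"
  shows "x \<bullet> proj_onto M g = x \<bullet> g"
proof -
  have "(g - proj_onto M g) \<bullet> x = 0" using proj_prop[OF assms(1)] assms(2) by auto
  then show ?thesis by (simp add: inner_diff_left inner_diff_right inner_commute)
qed

lemma compl_exists:
  fixes M :: "(real^'n) set"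
  assumes "subspace M" "S \<subseteq> M" "span S \<noteq> M"
  shows "\<exists>x\<in>M. x \<noteq> 0 \<and> (\<forall>s\<in>S. x \<bullet> s = 0)"
proof -
  have "span S \<subseteq> M" using assms by (simp add: span_minimal)
  then obtain z where z: "z \<in> M" "z \<notin> span S" using assms(3) by blast
  obtain p q where p: "p \<in> span S" "\<And>w. w \<in> span S \<Longrightarrow> orthogonal q w" "z = p + q"
    using orthogonal_subspace_decomp_exists by blast
  have "q = z - p" using p by simp
  moreover have "p \<in> M" using p(1) \<open>span S \<subseteq> M\<close> by blast
  ultimately have "q \<in> M" using z assms(1) by (simp add: subspace_diff)
  moreover have "q \<noteq> 0" using p z by auto
  moreover have "\<forall>s\<in>S. q \<bullet> s = 0" using p(2) by (auto simp: orthogonal_def span_base)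
  ultimately show ?thesis by blast
qed

definition outer :: "real^'n \<Rightarrow> real^'n \<Rightarrow> real^'n^'n" where
  "outer x y = (\<chi> i j. x$i * x$j - y$i * y$j)"

lemma outer_mult: "outer x y *v v = (x \<bullet> v) *\<^sub>R x - (y \<bullet> v) *\<^sub>R y"
  by (simp add: vec_eq_iff outer_def matrix_vector_mult_def inner_vec_def sum_distrib_left
      sum_subtractf algebra_simps)

lemma outer_quad: "v \<bullet> (outer x y *v v) = (x \<bullet> v)^2 - (y \<bullet> v)^2"
  by (simp add: outer_mult inner_diff_right power2_eq_square inner_commute)

lemma outer_S2: "outer x y \<in> S2"
proof -
  have t: "transpose (outer x y) = outer x y"
    by (simp add: vec_eq_iff outer_def transpose_def)
  have "range (\<lambda>v. outer x y *v v) \<subseteq> span {x, y}"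
    unfolding outer_mult
    by (auto intro!: span_diff span_mul simp: span_base)
  then have "dim (range (\<lambda>v. outer x y *v v)) \<le> card {x, y}"
    by (intro dim_le_card) auto
  also have "\<dots> \<le> 2" by (simp add: card_insert_if)
  finally show ?thesis using t by (simp add: S2_def rank_dim_range)
qed

lemma outer_ker:
  "outer x y \<in> ker_Theta f I \<longleftrightarrow> (\<forall>i\<in>I. \<bar>x \<bullet> f i\<bar> = \<bar>y \<bullet> f i\<bar>)"
proof -
  have t: "transpose (outer x y) = outer x y"
    by (simp add: vec_eq_iff outer_def transpose_def)
  have "(\<bar>x \<bullet> f i\<bar> = \<bar>y \<bullet> f i\<bar>) \<longleftrightarrow> (x \<bullet> f i)^2 - (y \<bullet> f i)^2 = 0" for i
    by (metis abs_le_square_iff eq_iff_diff_eq_0 order_antisym order_refl)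
  then show ?thesis using t
    by (auto simp: ker_Theta_def Theta_def fun_eq_iff outer_quad)
qed

theorem lemma3p5:
  fixes f :: "nat \<Rightarrow> real^'n" and N :: nat and \<Lambda> :: "nat set"
  assumes "is_frame f {1..N}"
    and "\<Lambda> \<subseteq> {1..N}"
    and "ker_Theta f \<Lambda> \<inter> S2 = ker_Theta f {1..N} \<inter> S2"
  shows "(\<forall>M. subspace M \<longrightarrow> (PR_subspace f {1..N} M \<longleftrightarrow> PR_subspace f \<Lambda> M))
    \<and> (\<forall>M. subspace M \<longrightarrow> (max_PR_subspace f {1..N} M \<longleftrightarrow> max_PR_subspace f \<Lambda> M))"
proof -
  have keq: "(\<forall>i\<in>\<Lambda>. \<bar>x \<bullet> f i\<bar> = \<bar>y \<bullet> f i\<bar>) \<longleftrightarrow> (\<forall>i\<in>{1..N}. \<bar>x \<bullet> f i\<bar> = \<bar>y \<bullet> f i\<bar>)" for x y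
    using assms(3) outer_S2[of x y] outer_ker[of x y f] by blast
  have PReq: "PR_subspace f {1..N} M \<longleftrightarrow> PR_subspace f \<Lambda> M" if sM: "subspace M" for M
  proof -
    have pin: "x \<bullet> proj_onto M (f i) = x \<bullet> f i" if "x \<in> M" for x i
      using proj_inner[OF sM that] .
    have inj: "(\<forall>x\<in>M. \<forall>y\<in>M. (\<forall>i\<in>{1..N}. \<bar>x \<bullet> proj_onto M (f i)\<bar> = \<bar>y \<bullet> proj_onto M (f i)\<bar>)
        \<longrightarrow> x = y \<or> x = - y) \<longleftrightarrow>
       (\<forall>x\<in>M. \<forall>y\<in>M. (\<forall>i\<in>\<Lambda>. \<bar>x \<bullet> proj_onto M (f i)\<bar> = \<bar>y \<bullet> proj_onto M (f i)\<bar>)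
        \<longrightarrow> x = y \<or> x = - y)"
      using keq by (simp add: pin)
    have sub: "(\<lambda>i. proj_onto M (f i)) ` I \<subseteq> M" for I
      using proj_prop[OF sM] by auto
    have spanF: "span ((\<lambda>i. proj_onto M (f i)) ` {1..N}) = M"
    proof (rule ccontr)
      assume "span ((\<lambda>i. proj_onto M (f i)) ` {1..N}) \<noteq> M"
      then obtain x where x: "x \<in> M" "x \<noteq> 0" "\<forall>s\<in>(\<lambda>i. proj_onto M (f i)) ` {1..N}. x \<bullet> s = 0"
        using compl_exists[OF sM sub] by blast
      have "\<And>y. y \<in> f ` {1..N} \<Longrightarrow> orthogonal x y"
        using x pin by (auto simp: orthogonal_def)
      then have "orthogonal x x"
        using orthogonal_to_span[of x "f ` {1..N}" x] assms(1) by (simp add: is_frame_def)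
      then show False using x by (simp add: orthogonal_def)
    qed
    show ?thesis
    proof
      assume H: "PR_subspace f {1..N} M"
      have injL: "\<forall>x\<in>M. \<forall>y\<in>M. (\<forall>i\<in>\<Lambda>. \<bar>x \<bullet> proj_onto M (f i)\<bar> = \<bar>y \<bullet> proj_onto M (f i)\<bar>)
        \<longrightarrow> x = y \<or> x = - y" using H inj by (simp add: PR_subspace_def)
      have "span ((\<lambda>i. proj_onto M (f i)) ` \<Lambda>) = M"
      proof (rule ccontr)
        assume "span ((\<lambda>i. proj_onto M (f i)) ` \<Lambda>) \<noteq> M"
        then obtain x where x: "x \<in> M" "x \<noteq> 0" "\<forall>s\<in>(\<lambda>i. proj_onto M (f i)) ` \<Lambda>. x \<bullet> s = 0"
          using compl_exists[OF sM sub] by blast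
        have "0 \<in> M" using sM by (simp add: subspace_0)
        then have "x = 0 \<or> x = - 0" using injL x by auto
        then show False using x by simp
      qed
      then show "PR_subspace f \<Lambda> M" using injL sM by (simp add: PR_subspace_def)
    next
      assume H: "PR_subspace f \<Lambda> M"
      then show "PR_subspace f {1..N} M" using inj spanF sM by (simp add: PR_subspace_def)
    qed
  qed
  have sM: "PR_subspace g I M \<Longrightarrow> subspace M" for g I M by (simp add: PR_subspace_def)
  show ?thesis
    using PReq unfolding max_PR_subspace_def by (meson sM)
qed

end
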